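(* For a positive integer $m$, let $M_1(m)$ be the number of ordinary partitions of $m$ in which the largest part occurs exactly once and every other part size that occurs, occurs exactly twice. Let $M_2(m)$ be the number of partitions of $m$ with $n$ copies of $n$ in which, with parts in ascending lexicographic order, the weighted difference between each part and the preceding one is $0$, and the smallest part is of the form $j_j$. Then $M_1(m)=M_2(m)$.
   Context: $M=\{m_i: 1\le i\le m\}$; a partition with $n$ copies of $n$ is a finite multiset of elements of $M$ whose values (first entries) sum to the number partitioned. Lexicographic order: $m_i>n_j$ iff $m>n$, or $m=n$ and $i>j$. Weighted difference $((m_i-n_j))=m-n-i-j$. *)

theory Defs
  imports Main "HOL-Library.Multiset" "HOL-Library.Product_Lexorder"
begin

text \<open>A part m_i of a partition with n copies of n is the pair (m, i) with 1 \<le> i \<le> m.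
  The linear order on pairs from Product_Lexorder is exactly the paper's lexicographic order.\<close>

definition weighted_diff :: "nat \<times> nat \<Rightarrow> nat \<times> nat \<Rightarrow> int" where
  "weighted_diff p q = int (fst p) - int (fst q) - int (snd p) - int (snd q)"

definition ncopies_partition :: "nat \<Rightarrow> (nat \<times> nat) multiset \<Rightarrow> bool" where
  "ncopies_partition m P \<longleftrightarrow>
     (\<forall>p \<in># P. 1 \<le> snd p \<and> snd p \<le> fst p) \<and> sum_mset (image_mset fst P) = m"

definition M1 :: "nat \<Rightarrow> nat" where
  "M1 m = card {P :: nat multiset.
     (\<forall>x \<in># P. 0 < x) \<and> sum_mset P = m \<and> P \<noteq> {#} \<and>
     count P (Max_mset P) = 1 \<and>
     (\<forall>x \<in># P. x \<noteq> Max_mset P \<longrightarrow> count P x = 2)}"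

definition M2 :: "nat \<Rightarrow> nat" where
  "M2 m = card {P :: (nat \<times> nat) multiset.
     ncopies_partition m P \<and> P \<noteq> {#} \<and>
     (let xs = sorted_list_of_multiset P in
        (\<forall>k. Suc k < length xs \<longrightarrow> weighted_diff (xs ! Suc k) (xs ! k) = 0) \<and>
        fst (hd xs) = snd (hd xs))}"

end

theory Submission
  imports Defs
begin

fun pr :: "nat \<Rightarrow> nat list \<Rightarrow> (nat \<times> nat) list" where
  "pr c [] = []"
| "pr c (x#xs) = (c+x, x-c) # pr x xs"

lemma pr_length[simp]: "length (pr c xs) = length xs"
  by (induct xs arbitrary: c) auto

lemma pr_nth: "k < length xs \<Longrightarrow> pr c xs ! k = ((c#xs)!k + xs!k, xs!k - (c#xs)!k)"
  by (induct xs arbitrary: c k) (auto simp: nth_Cons split: nat.splits)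

lemma pr_sum: "sum_list (map fst (pr c xs)) = sum_list xs + sum_list (butlast (c#xs))"
  by (induct xs arbitrary: c) auto

lemma pr_sorted: "sorted_wrt (<) (c#xs) \<Longrightarrow> sorted_wrt (<) (pr c xs)"
proof (induct xs arbitrary: c)
  case Nil then show ?case by simp
next
  case (Cons x xs)
  have "\<forall>p\<in>set (pr x xs). fst p > c + x"
  proof
    fix p assume "p \<in> set (pr x xs)"
    then obtain k where k: "k < length xs" "p = pr x xs ! k" by (metis in_set_conv_nth pr_length)
    have a1: "xs ! k > x" using Cons.prems k(1) by auto
    have a2: "(x#xs)!k \<ge> x" using Cons.prems k(1) by (cases k) (auto simp: less_imp_le)
    have a3: "c < x" using Cons.prems by simp
    have "c + x < (x#xs)!k + xs!k" using a1 a2 a3 by linarith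
    then show "fst p > c + x" using k Cons.prems by (simp add: pr_nth)
  qed
  then have "\<forall>p\<in>set (pr x xs). (c+x, x-c) < p"
    by (auto simp: less_prod_def)
  then show ?case using Cons by auto
qed

definition S :: "nat \<Rightarrow> nat list set" where
  "S m = {xs. sorted_wrt (<) (0#xs) \<and> xs \<noteq> [] \<and> sum_list xs + sum_list (butlast xs) = m}"

definition A1 :: "nat \<Rightarrow> nat multiset set" where
  "A1 m = {P :: nat multiset.
     (\<forall>x \<in># P. 0 < x) \<and> sum_mset P = m \<and> P \<noteq> {#} \<and>
     count P (Max_mset P) = 1 \<and>
     (\<forall>x \<in># P. x \<noteq> Max_mset P \<longrightarrow> count P x = 2)}"

definition A2 :: "nat \<Rightarrow> (nat \<times> nat) multiset set" where
  "A2 m = {P :: (nat \<times> nat) multiset.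
     ncopies_partition m P \<and> P \<noteq> {#} \<and>
     (let xs = sorted_list_of_multiset P in
        (\<forall>k. Suc k < length xs \<longrightarrow> weighted_diff (xs ! Suc k) (xs ! k) = 0) \<and>
        fst (hd xs) = snd (hd xs))}"

lemma sorted_last_Max: "sorted xs \<Longrightarrow> xs \<noteq> [] \<Longrightarrow> Max (set xs) = last xs"
proof (rule Max_eqI)
  assume s: "sorted xs" and n: "xs \<noteq> []"
  show "finite (set xs)" by simp
  show "last xs \<in> set xs" using n by simp
  fix y assume "y \<in> set xs"
  then obtain k where "k < length xs" "y = xs ! k" by (metis in_set_conv_nth)
  then show "y \<le> last xs" using s n by (simp add: last_conv_nth sorted_nth_mono)
qed

lemma count_distinct: "distinct xs \<Longrightarrow> count (mset xs) x = (if x \<in> set xs then 1 else 0)"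
  by (simp add: distinct_count_atmost_1)

lemma set_butlast_distinct: "distinct xs \<Longrightarrow> xs \<noteq> [] \<Longrightarrow> set (butlast xs) = set xs - {last xs}"
proof -
  assume d: "distinct xs" and n: "xs \<noteq> []"
  have e: "xs = butlast xs @ [last xs]" using n by simp
  have "distinct (butlast xs @ [last xs])" using d e by simp
  then have "last xs \<notin> set (butlast xs)" by simp
  moreover have "set xs = set (butlast xs) \<union> {last xs}" using e by (metis set_append list.set(1) list.set(2))
  ultimately show ?thesis by blast
qed

lemma f1_props:
  assumes "sorted_wrt (<) xs" "xs \<noteq> []"
  shows "Max_mset (mset xs + mset (butlast xs)) = last xs"
    "count (mset xs + mset (butlast xs)) x =
       (if x \<in> set xs then (if x = last xs then 1 else 2) else 0)"
proof -
  have d: "distinct xs" "sorted xs" using assms strict_sorted_iff by auto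
  have db: "distinct (butlast xs)" using d distinct_butlast by blast
  have sb: "set (butlast xs) = set xs - {last xs}" using set_butlast_distinct d assms by blast
  have "set_mset (mset xs + mset (butlast xs)) = set xs" using sb by auto
  then show "Max_mset (mset xs + mset (butlast xs)) = last xs" using sorted_last_Max d assms by simp
  show "count (mset xs + mset (butlast xs)) x =
       (if x \<in> set xs then (if x = last xs then 1 else 2) else 0)"
    using count_distinct[OF d(1)] count_distinct[OF db] sb by auto
qed

lemma bij1: "bij_betw (\<lambda>xs. mset xs + mset (butlast xs)) (S m) (A1 m)"
proof (rule bij_betw_imageI)
  show "inj_on (\<lambda>xs. mset xs + mset (butlast xs)) (S m)"
  proof (rule inj_onI)
    fix xs ys assume xs: "xs \<in> S m" and ys: "ys \<in> S m"
      and e: "mset xs + mset (butlast xs) = mset ys + mset (butlast ys)"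
    have sx: "sorted_wrt (<) xs" "xs \<noteq> []" and sy: "sorted_wrt (<) ys" "ys \<noteq> []"
      using xs ys by (auto simp: S_def)
    have "set xs = set ys"
    proof -
      have "x \<in> set xs \<longleftrightarrow> x \<in> set ys" for x
      proof -
        have "x \<in> set xs \<longleftrightarrow> count (mset xs + mset (butlast xs)) x \<noteq> 0"
          using f1_props(2)[OF sx, of x] by auto
        moreover have "x \<in> set ys \<longleftrightarrow> count (mset ys + mset (butlast ys)) x \<noteq> 0"
          using f1_props(2)[OF sy, of x] by auto
        ultimately show ?thesis by (simp only: e)
      qed
      then show ?thesis by blast
    qed
    then show "xs = ys" using sx sy
    proof -
      have "sorted xs" "distinct xs" "sorted ys" "distinct ys"
        using sx(1) sy(1) strict_sorted_iff by auto
      then show ?thesis using \<open>set xs = set ys\<close> by (rule sorted_distinct_set_unique)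
    qed
  qed
next
  show "(\<lambda>xs. mset xs + mset (butlast xs)) ` S m = A1 m"
  proof
    show "(\<lambda>xs. mset xs + mset (butlast xs)) ` S m \<subseteq> A1 m"
    proof
      fix P assume "P \<in> (\<lambda>xs. mset xs + mset (butlast xs)) ` S m"
      then obtain xs where xs: "xs \<in> S m" and P: "P = mset xs + mset (butlast xs)" by blast
      have sx: "sorted_wrt (<) xs" "xs \<noteq> []" "sorted_wrt (<) (0#xs)"
        and sm: "sum_list xs + sum_list (butlast xs) = m"
        using xs by (auto simp: S_def)
      have pos: "\<forall>x \<in># P. 0 < x"
      proof
        fix x assume "x \<in># P"
        then have "x \<in> set xs" using P in_set_butlastD by auto
        then show "0 < x" using sx(3) by auto
      qed
      have "sum_mset P = m" using P sm by (simp add: sum_mset_sum_list)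
      moreover have "P \<noteq> {#}" using P sx by simp
      moreover have "count P (Max_mset P) = 1"
        using f1_props[OF sx(1,2)] P sx(2) by simp
      moreover have "\<forall>x \<in># P. x \<noteq> Max_mset P \<longrightarrow> count P x = 2"
      proof (intro ballI impI)
        fix x assume x: "x \<in># P" "x \<noteq> Max_mset P"
        then have "x \<in> set xs" using P in_set_butlastD by auto
        moreover have "x \<noteq> last xs" using x f1_props(1)[OF sx(1,2)] P by simp
        ultimately show "count P x = 2" using f1_props(2)[OF sx(1,2), of x] P by simp
      qed
      ultimately show "P \<in> A1 m" using pos by (simp add: A1_def)
    qed
  next
    show "A1 m \<subseteq> (\<lambda>xs. mset xs + mset (butlast xs)) ` S m"
    proof
      fix P assume PA: "P \<in> A1 m"
      define xs where "xs = sorted_list_of_set (set_mset P)"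
      have fin: "finite (set_mset P)" by simp
      have sx: "sorted_wrt (<) xs" "set xs = set_mset P"
        unfolding xs_def using fin by (simp_all add: strict_sorted_list_of_set)
      have A: "P \<noteq> {#}" "count P (Max_mset P) = 1"
        "\<forall>x \<in># P. x \<noteq> Max_mset P \<longrightarrow> count P x = 2" "\<forall>x \<in># P. 0 < x"
        using PA by (simp_all add: A1_def)
      have ne: "xs \<noteq> []"
      proof
        assume "xs = []"
        then have "set_mset P = {}" using sx(2) by simp
        then show False using A(1) by simp
      qed
      have sx0: "sorted_wrt (<) (0#xs)" using sx A(4) by auto
      have srt: "sorted xs" using sx(1) strict_sorted_iff by blast
      have lastM: "last xs = Max_mset P"
        using sorted_last_Max[OF srt ne] sx(2) by simp
      have eq: "mset xs + mset (butlast xs) = P"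
      proof (rule multiset_eqI)
        fix x
        have c: "count (mset xs + mset (butlast xs)) x =
          (if x \<in> set xs then (if x = last xs then 1 else 2) else 0)"
          by (rule f1_props(2)[OF sx(1) ne])
        show "count (mset xs + mset (butlast xs)) x = count P x"
        proof (cases "x \<in># P")
          case True
          then show ?thesis using c A(2,3) sx(2) lastM by (cases "x = Max_mset P") simp_all
        next
          case False
          then have "count P x = 0" by (simp add: count_eq_zero_iff)
          then show ?thesis using c False sx(2) by simp
        qed
      qed
      have "sum_list xs + sum_list (butlast xs) = m"
      proof -
        have "sum_mset P = m" using PA by (simp add: A1_def)
        then have "sum_mset (mset xs + mset (butlast xs)) = m" using eq by simp
        then show ?thesis by (simp add: sum_mset_sum_list)
      qed
      then have "xs \<in> S m" using sx0 ne by (simp add: S_def)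
      then show "P \<in> (\<lambda>xs. mset xs + mset (butlast xs)) ` S m"
        by (rule rev_image_eqI) (simp add: eq)
    qed
  qed
qed

lemma pr_inj: "pr c xs = pr c ys \<Longrightarrow> xs = ys"
proof (induct xs arbitrary: ys c)
  case Nil then show ?case by (cases ys) auto
next
  case (Cons x xs) then show ?case by (cases ys) auto
qed

lemma pr_sum0: "xs \<noteq> [] \<Longrightarrow> sum_mset (image_mset fst (mset (pr 0 xs))) = sum_list xs + sum_list (butlast xs)"
proof -
  assume "xs \<noteq> []"
  then have "butlast (0#xs) = 0 # butlast xs" by (cases xs) auto
  moreover have "image_mset fst (mset (pr 0 xs)) = mset (map fst (pr 0 xs))" by simp
  ultimately show ?thesis using pr_sum[of 0 xs] by (simp only: sum_mset_sum_list) simp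
qed

lemma snth: "sorted_wrt (<) (0#xs) \<Longrightarrow> k < length xs \<Longrightarrow> (0#xs)!k < xs!k"
  using sorted_wrt_nth_less[of "(<)" "0#xs" k "Suc k"] by simp

lemma bij2: "bij_betw (\<lambda>xs. mset (pr 0 xs)) (S m) (A2 m)"
proof (rule bij_betw_imageI)
  show "inj_on (\<lambda>xs. mset (pr 0 xs)) (S m)"
  proof (rule inj_onI)
    fix xs ys assume xs: "xs \<in> S m" and ys: "ys \<in> S m"
      and e: "mset (pr 0 xs) = mset (pr 0 ys)"
    have "sorted (pr 0 xs)" "sorted (pr 0 ys)"
      using xs ys pr_sorted strict_sorted_iff by (auto simp: S_def)
    then have "pr 0 xs = pr 0 ys" using e
      by (metis sorted_list_of_multiset_mset sorted_sort_id)
    then show "xs = ys" by (rule pr_inj)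
  qed
next
  show "(\<lambda>xs. mset (pr 0 xs)) ` S m = A2 m"
  proof
    show "(\<lambda>xs. mset (pr 0 xs)) ` S m \<subseteq> A2 m"
    proof
      fix P assume "P \<in> (\<lambda>xs. mset (pr 0 xs)) ` S m"
      then obtain xs where xs: "xs \<in> S m" and P: "P = mset (pr 0 xs)" by blast
      have sx: "sorted_wrt (<) (0#xs)" "xs \<noteq> []"
        and sm: "sum_list xs + sum_list (butlast xs) = m"
        using xs by (auto simp: S_def)
      have srt: "sorted_list_of_multiset P = pr 0 xs"
        using P pr_sorted[OF sx(1)] strict_sorted_iff sorted_sort_id by auto
      have nc: "ncopies_partition m P"
        unfolding ncopies_partition_def
      proof
        show "\<forall>p\<in>#P. 1 \<le> snd p \<and> snd p \<le> fst p"
        proof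
          fix p assume "p \<in># P"
          then obtain k where k: "k < length xs" "p = pr 0 xs ! k"
            using P by (metis in_set_conv_nth pr_length set_mset_mset)
          moreover have "(0#xs)!k < xs!k" using snth[OF sx(1) k(1)] .
          ultimately show "1 \<le> snd p \<and> snd p \<le> fst p"
            by (simp add: pr_nth) linarith
        qed
        show "sum_mset (image_mset fst P) = m" using P pr_sum0[OF sx(2)] sm by simp
      qed
      have wd: "\<forall>k. Suc k < length (pr 0 xs) \<longrightarrow> weighted_diff (pr 0 xs ! Suc k) (pr 0 xs ! k) = 0"
      proof (intro allI impI)
        fix k assume k: "Suc k < length (pr 0 xs)"
        have l1: "(0#xs)!k < xs!k" using snth[OF sx(1)] k by simp
        have l2: "xs!k < xs!Suc k" using snth[OF sx(1), of "Suc k"] k by simp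
        show "weighted_diff (pr 0 xs ! Suc k) (pr 0 xs ! k) = 0"
          using k l1 l2 by (simp add: pr_nth weighted_diff_def of_nat_diff)
      qed
      have hd: "fst (hd (pr 0 xs)) = snd (hd (pr 0 xs))"
        using sx(2) by (cases xs) auto
      show "P \<in> A2 m" unfolding A2_def using nc wd hd srt P sx(2) by (cases xs) (simp_all add: Let_def)
    qed
  next
    show "A2 m \<subseteq> (\<lambda>xs. mset (pr 0 xs)) ` S m"
    proof
      fix P assume PA: "P \<in> A2 m"
      define ys where "ys = sorted_list_of_multiset P"
      have nc: "ncopies_partition m P" and ne: "P \<noteq> {#}"
        and wd: "\<And>k. Suc k < length ys \<Longrightarrow> weighted_diff (ys ! Suc k) (ys ! k) = 0"
        and hd: "fst (hd ys) = snd (hd ys)"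
        using PA by (auto simp: A2_def ys_def Let_def)
      have yne: "ys \<noteq> []" using ne ys_def
        by (metis mset_sorted_list_of_multiset mset_zero_iff)
      have bnd: "\<And>k. k < length ys \<Longrightarrow> 1 \<le> snd (ys!k) \<and> snd (ys!k) \<le> fst (ys!k)"
      proof -
        fix k assume "k < length ys"
        then have "ys!k \<in># P" using ys_def by (metis nth_mem set_sorted_list_of_multiset)
        then show "1 \<le> snd (ys!k) \<and> snd (ys!k) \<le> fst (ys!k)"
          using nc by (auto simp: ncopies_partition_def)
      qed
      have rec: "\<And>k. Suc k < length ys \<Longrightarrow>
          fst (ys ! Suc k) = fst (ys!k) + snd (ys!k) + snd (ys!Suc k)"
      proof -
        fix k assume "Suc k < length ys"
        then have "weighted_diff (ys ! Suc k) (ys ! k) = 0" by (rule wd)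
        then show "fst (ys ! Suc k) = fst (ys!k) + snd (ys!k) + snd (ys!Suc k)"
          by (simp add: weighted_diff_def)
      qed
      have h0: "fst (ys!0) = snd (ys!0)" using hd yne by (simp add: hd_conv_nth)
      have ev: "k < length ys \<Longrightarrow> even (fst (ys!k) + snd (ys!k))" for k
      proof (induct k)
        case 0 then show ?case using h0 by simp
      next
        case (Suc k)
        then have "even (fst (ys!k) + snd (ys!k))" by simp
        then show ?case using rec[OF Suc.prems] by simp
      qed
      define xs where "xs = map (\<lambda>p. (fst p + snd p) div 2) ys"
      have lx: "length xs = length ys" by (simp add: xs_def)
      have eq: "pr 0 xs = ys"
      proof (rule nth_equalityI)
        show "length (pr 0 xs) = length ys" using lx by simp
        fix k assume "k < length (pr 0 xs)"
        then have k: "k < length ys" using lx by simp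
        show "pr 0 xs ! k = ys ! k"
        proof (cases k)
          case 0
          then show ?thesis using k h0 yne by (simp add: pr_nth lx xs_def prod_eq_iff)
        next
          case (Suc j)
          have r: "fst (ys ! k) = fst (ys!j) + snd (ys!j) + snd (ys!k)" using rec[of j] k Suc by simp
          obtain t where t: "fst (ys!j) + snd (ys!j) = 2*t" using ev[of j] k Suc by (metis Suc_lessD evenE)
          have xk: "xs!k = t + snd (ys!k)" using k r t by (simp add: xs_def)
          have xj: "(0#xs)!k = t" using k t Suc by (simp add: xs_def)
          show ?thesis using xk xj r t k lx by (simp add: pr_nth prod_eq_iff)
        qed
      qed
      have sx: "sorted_wrt (<) (0#xs)"
      proof -
        have "\<forall>i. Suc i < length (0#xs) \<longrightarrow> (0#xs)!i < (0#xs)!Suc i"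
        proof (intro allI impI)
          fix i assume i: "Suc i < length (0#xs)"
          then have "snd (ys!i) \<ge> 1" using bnd lx by simp
          then have "snd (pr 0 xs ! i) \<ge> 1" using eq by simp
          then show "(0#xs)!i < (0#xs)!Suc i" using i by (simp add: pr_nth)
        qed
        moreover have tr: "transp ((<)::nat\<Rightarrow>nat\<Rightarrow>bool)" by (auto intro: transpI)
        ultimately show ?thesis using sorted_wrt_iff_nth_Suc_transp[OF tr, of "0#xs"] by blast
      qed
      have xne: "xs \<noteq> []" using yne xs_def by simp
      have Pm: "P = mset (pr 0 xs)" using eq ys_def by simp
      have "sum_list xs + sum_list (butlast xs) = m"
        using pr_sum0[OF xne] Pm nc by (simp add: ncopies_partition_def)
      then have "xs \<in> S m" using sx xne by (simp add: S_def)
      then show "P \<in> (\<lambda>xs. mset (pr 0 xs)) ` S m" using Pm by blast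
    qed
  qed
qed

theorem corollary28:
  fixes m :: nat
  assumes "0 < m"
  shows "M1 m = M2 m"
proof -
  have "M1 m = card (A1 m)" by (simp add: M1_def A1_def)
  also have "\<dots> = card (S m)" using bij_betw_same_card[OF bij1] by simp
  also have "\<dots> = card (A2 m)" using bij_betw_same_card[OF bij2] by simp
  also have "\<dots> = M2 m" by (simp add: M2_def A2_def)
  finally show ?thesis .
qed

end
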